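(* Let $k_E/k_F$ be an extension of finite fields of degree $r$ and $\psi$ a nontrivial additive character of $k_F$. For every integer $n\ge0$ and every $a\in k_F^\times$, \[\mathrm{Kl}^{n,r}_a(\psi;k_E/k_F)=(-1)^{r-1}\mathrm{Kl}^{n+1,0}_a(\psi;k_E/k_F).\]
   Context: $\mathrm{Nr},\mathrm{Tr}$ are the norm and trace of $k_E/k_F$. For $a\in k_F^\times$ and integers $n,m\ge0$, $\mathrm{Kl}^{n,m}_a(\psi;k_E/k_F)=\sum\psi\circ\mathrm{Tr}(t_1+\cdots+t_n)\cdot\psi(s_1+\cdots+s_m)$, the sum over $t_1,\ldots,t_n\in k_E$ and $s_1,\ldots,s_m\in k_F$ with $\mathrm{Nr}(t_1)\cdots\mathrm{Nr}(t_n)s_1\cdots s_m=a$. *)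

theory Defs
  imports Complex_Main "HOL-Library.FuncSet" "HOL-Library.Cardinality"
begin

text \<open>A finite field extension k_E/k_F is modelled by two finite field types 'f, 'e
  and a ring embedding iota : 'f -> 'e, with CARD('e) = CARD('f)^r.\<close>

definition fin_trace :: "('f::{finite,field} \<Rightarrow> 'e::{finite,field}) \<Rightarrow> nat \<Rightarrow> 'e \<Rightarrow> 'f" where
  "fin_trace \<iota> r x = inv \<iota> (\<Sum>i<r. x ^ (CARD('f) ^ i))"

definition fin_norm :: "('f::{finite,field} \<Rightarrow> 'e::{finite,field}) \<Rightarrow> nat \<Rightarrow> 'e \<Rightarrow> 'f" where
  "fin_norm \<iota> r x = inv \<iota> (\<Prod>i<r. x ^ (CARD('f) ^ i))"

definition Kl :: "('f::{finite,field} \<Rightarrow> complex) \<Rightarrow> ('f \<Rightarrow> 'e::{finite,field}) \<Rightarrow> nat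
    \<Rightarrow> nat \<Rightarrow> nat \<Rightarrow> 'f \<Rightarrow> complex" where
  "Kl \<psi> \<iota> r n m a =
     (\<Sum>(t, s) \<in> {(t, s). t \<in> ({..<n} \<rightarrow>\<^sub>E (UNIV :: 'e set)) \<and> s \<in> ({..<m} \<rightarrow>\<^sub>E (UNIV :: 'f set)) \<and>
                        (\<Prod>i<n. fin_norm \<iota> r (t i)) * (\<Prod>j<m. s j) = a}.
        \<psi> (fin_trace \<iota> r (\<Sum>i<n. t i)) * \<psi> (\<Sum>j<m. s j))"

end

theory Submission
  imports Defs "HOL-Computational_Algebra.Polynomial_Factorial" "HOL-Library.Poly_Mapping"
begin

lemma pow_card_same:
  fixes x :: "'a :: {finite, field}"
  shows "x ^ CARD('a) = x"
proof (cases "x = 0")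
  case False
  have "x * (\<Prod>y\<in>UNIV-{0}. x * y) = x * x ^ (CARD('a) - 1) * \<Prod>(UNIV-{0})"
    by (simp add: prod.distrib mult_ac)
  also have "x * x ^ (CARD('a) - 1) = x ^ Suc (CARD('a) - 1)"
    by (subst power_Suc) auto
  also have "Suc (CARD('a) - 1) = CARD('a)"
    using finite_UNIV_card_ge_0[where ?'a = 'a] by simp
  also have "(\<Prod>y\<in>UNIV-{0}. x * y) = (\<Prod>y\<in>UNIV-{0}. y)"
    by (rule prod.reindex_bij_witness[of _ "\<lambda>y. y / x" "\<lambda>y. x * y"]) (use False in auto)
  finally show ?thesis
    by simp
qed (use finite_UNIV_card_ge_0[where ?'a = 'a] in auto)

lemma pow_card_pow_same:
  fixes x :: "'a :: {finite, field}"
  shows "x ^ (CARD('a) ^ n) = x"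
  by (induction n) (simp_all add: pow_card_same power_mult)

lemma card_ge2: "CARD('a :: {finite, field}) \<ge> 2"
proof -
  have "{0, 1::'a} \<subseteq> UNIV" by simp
  hence "card {0, 1::'a} \<le> CARD('a)" by (intro card_mono) auto
  thus ?thesis by simp
qed

lemma choose_card_zero:
  assumes "0 < i" "i < CARD('a :: {finite, field})"
  shows "of_nat (CARD('a) choose i) = (0 :: 'a)"
proof -
  define q where "q = CARD('a)"
  define p :: "'a poly" where "p = [:1, 1:] ^ q - monom 1 q - 1"
  have q2: "q \<ge> 2" using card_ge2[where 'a='a] by (simp add: q_def)
  have roots: "poly p x = 0" for x
    using pow_card_same[of "x + 1"] pow_card_same[of x]
    by (simp add: p_def q_def poly_monom algebra_simps)
  have "p = 0"
  proof (rule ccontr)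
    assume "p \<noteq> 0"
    hence "card {x. poly p x = 0} \<le> degree p" by (rule card_poly_roots_bound)
    also have "degree p < q"
    proof -
      have c0: "coeff ([:1,1::'a:]^q) n = of_nat (q choose n)" for n
      proof (cases "n \<le> q")
        case True then show ?thesis using coeff_linear_poly_power[of n q 1 1] by simp
      next
        case False
        have "degree ([:1,1::'a:]^q) \<le> q" using degree_power_le[of "[:1,1::'a:]" q] by simp
        then show ?thesis using False by (simp add: coeff_eq_0 binomial_eq_0)
      qed
      have c: "coeff p n = of_nat (q choose n) - (if q = n then 1 else 0) - (if n = 0 then 1 else 0)" for n
        by (simp add: p_def c0 coeff_monom coeff_1)
      have "coeff p n = 0" if "n > q - 1" for n
      proof -
        have "n \<ge> q" using that q2 by linarith
        then consider "n = q" | "n > q" by linarith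
        then show ?thesis
        proof cases
          case 1 then show ?thesis using q2 by (simp add: c)
        next
          case 2 then show ?thesis using q2 by (simp add: c binomial_eq_0)
        qed
      qed
      hence "degree p \<le> q - 1" by (intro degree_le) auto
      thus ?thesis using q2 by simp
    qed
    finally show False using roots by (simp add: q_def)
  qed
  hence "coeff p i = 0" by simp
  moreover have "coeff ([:1,1::'a:]^q) i = of_nat (q choose i)"
    using coeff_linear_poly_power[of i q 1 1] assms by (simp add: q_def)
  moreover have "coeff p i = of_nat (q choose i)"
    using assms q2 calculation(2) by (simp add: p_def coeff_monom coeff_1 q_def)
  ultimately show ?thesis by (simp add: q_def)
qed


locale kfe =
  fixes \<iota> :: "'f::{finite,field} \<Rightarrow> 'e::{finite,field}" and r :: nat
  assumes hom_add: "\<And>x y. \<iota> (x + y) = \<iota> x + \<iota> y"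
    and hom_mult: "\<And>x y. \<iota> (x * y) = \<iota> x * \<iota> y"
    and hom_one: "\<iota> 1 = 1"
    and degree: "CARD('e) = CARD('f) ^ r"
begin


lemma hom_zero [simp]: "\<iota> 0 = 0"
  using hom_add[of 0 0] by (metis add.right_neutral add_left_cancel)

lemma hom_uminus [simp]: "\<iota> (-x) = - \<iota> x"
  using hom_add[of x "-x"] by (metis add.commute add.right_inverse add_left_cancel hom_zero)

lemma hom_diff: "\<iota> (x - y) = \<iota> x - \<iota> y"
  using hom_add[of x "-y"] by simp

lemma hom_sum: "\<iota> (sum f A) = (\<Sum>x\<in>A. \<iota> (f x))"
  by (induction A rule: infinite_finite_induct) (auto simp: hom_add)

lemma hom_prod: "\<iota> (prod f A) = (\<Prod>x\<in>A. \<iota> (f x))"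
  by (induction A rule: infinite_finite_induct) (auto simp: hom_mult hom_one)

lemma hom_power: "\<iota> (x ^ n) = \<iota> x ^ n"
  by (induction n) (auto simp: hom_mult hom_one)

lemma hom_of_nat: "\<iota> (of_nat n) = of_nat n"
  by (induction n) (auto simp: hom_add hom_one)

lemma inj_hom: "inj \<iota>"
proof (rule injI)
  fix x y assume "\<iota> x = \<iota> y"
  hence "\<iota> (x - y) = 0" by (simp add: hom_diff)
  show "x = y"
  proof (rule ccontr)
    assume "x \<noteq> y"
    hence "\<iota> ((x - y) * inverse (x - y)) = 1" by (simp add: hom_one)
    with \<open>\<iota> (x - y) = 0\<close> show False by (simp add: hom_mult)
  qed
qed

lemma hom_eq_iff [simp]: "\<iota> x = \<iota> y \<longleftrightarrow> x = y"
  using inj_hom by (auto dest: injD)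

lemma hom_eq_0_iff [simp]: "\<iota> x = 0 \<longleftrightarrow> x = 0"
  using hom_eq_iff[of x 0] by simp

lemma inv_hom [simp]: "inv \<iota> (\<iota> x) = x"
  using inj_hom by simp

lemma hom_inv: "y \<in> range \<iota> \<Longrightarrow> \<iota> (inv \<iota> y) = y"
  by (simp add: f_inv_into_f)

lemma r_pos: "r > 0"
proof (rule ccontr)
  assume "\<not> r > 0"
  hence "CARD('e) = 1" using degree by simp
  thus False using card_ge2[where 'a='e] by simp
qed

lemma frob_add: "(x + y :: 'e) ^ CARD('f) = x ^ CARD('f) + y ^ CARD('f)"
proof -
  have q2: "CARD('f) \<ge> 2" by (rule card_ge2)
  have "(x + y) ^ CARD('f) = (\<Sum>k\<le>CARD('f). of_nat (CARD('f) choose k) * x ^ k * y ^ (CARD('f) - k))"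
    by (rule binomial_ring)
  also have "\<dots> = (\<Sum>k\<in>{0,CARD('f)}. of_nat (CARD('f) choose k) * x ^ k * y ^ (CARD('f) - k))"
  proof (intro sum.mono_neutral_right ballI)
    fix k assume "k \<in> {..CARD('f)} - {0, CARD('f)}"
    hence k: "k > 0" "k < CARD('f)" by auto
    have "of_nat (CARD('f) choose k) = \<iota> (of_nat (CARD('f) choose k))" by (simp add: hom_of_nat)
    also have "\<dots> = 0" using choose_card_zero[OF k] by simp
    finally show "of_nat (CARD('f) choose k) * x ^ k * y ^ (CARD('f) - k) = 0" by simp
  qed auto
  finally show ?thesis using q2 by (simp add: add_ac)
qed

lemma frob_add_pow: "(x + y :: 'e) ^ (CARD('f) ^ i) = x ^ (CARD('f) ^ i) + y ^ (CARD('f) ^ i)"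
proof (induction i)
  case (Suc i)
  have "(x + y) ^ (CARD('f) ^ Suc i) = ((x + y) ^ (CARD('f) ^ i)) ^ CARD('f)"
    by (simp add: power_mult[symmetric] mult.commute)
  also have "\<dots> = (x ^ (CARD('f) ^ i)) ^ CARD('f) + (y ^ (CARD('f) ^ i)) ^ CARD('f)" by (simp add: Suc frob_add)
  finally show ?case by (simp add: power_mult[symmetric] mult.commute)
qed simp

lemma frob_sum: "(sum f A :: 'e) ^ (CARD('f) ^ i) = (\<Sum>x\<in>A. f x ^ (CARD('f) ^ i))"
  by (induction A rule: infinite_finite_induct) (auto simp: frob_add_pow)

lemma frob_uminus: "(- x :: 'e) ^ (CARD('f) ^ i) = - (x ^ (CARD('f) ^ i))"
proof -
  have "(- x) ^ (CARD('f) ^ i) + x ^ (CARD('f) ^ i) = (- x + x) ^ (CARD('f) ^ i)" by (rule frob_add_pow[symmetric])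
  also have "\<dots> = 0" using finite_UNIV_card_ge_0[where 'a='f] by simp
  finally show ?thesis by (simp add: eq_neg_iff_add_eq_0)
qed

lemma frob_r: "(y :: 'e) ^ (CARD('f) ^ r) = y"
  using pow_card_same[of y] degree by simp

lemma frob_hom: "\<iota> x ^ (CARD('f) ^ i) = \<iota> x"
  by (simp add: hom_power[symmetric] pow_card_pow_same)

lemma range_hom: "range \<iota> = {y :: 'e. y ^ CARD('f) = y}"
proof -
  have sub: "range \<iota> \<subseteq> {y :: 'e. y ^ CARD('f) = y}"
    using frob_hom[of _ 1] by auto
  define p :: "'e poly" where "p = monom 1 CARD('f) - monom 1 1"
  have q2: "CARD('f) \<ge> 2" by (rule card_ge2)
  have "coeff p CARD('f) = 1" using q2 by (simp add: p_def coeff_monom)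
  hence pnz: "p \<noteq> 0" by auto
  have dp: "degree p \<le> CARD('f)"
    unfolding p_def using q2 by (intro degree_diff_le) (auto simp: degree_monom_eq)
  have "{y :: 'e. y ^ CARD('f) = y} = {y. poly p y = 0}" by (simp add: p_def poly_monom)
  hence "card {y :: 'e. y ^ CARD('f) = y} \<le> CARD('f)"
    using card_poly_roots_bound[OF pnz] dp by simp
  moreover have "card (range \<iota>) = CARD('f)"
    using inj_hom by (simp add: card_image)
  ultimately have "card {y :: 'e. y ^ CARD('f) = y} \<le> card (range \<iota>)" by simp
  thus ?thesis
    using sub by (intro card_seteq) auto
qed

end


context
begin

interpretation fp:
  normalization_euclidean_semiring_multiplicative where zero = "0 :: 'a :: field poly"
    and one = 1 and plus = plus and minus = minus
    and times = times
    and normalize = "\<lambda>p. smult (inverse (lead_coeff p)) p"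
    and unit_factor = "\<lambda>p. [:lead_coeff p:]"
    and euclidean_size = "\<lambda>p. if p = 0 then 0 else 2 ^ degree p"
    and divide = divide and modulo = modulo
  rewrites "dvd.dvd (times :: 'a poly \<Rightarrow> _) = Rings.dvd"
    and "comm_monoid_mult.prod_mset times 1 = prod_mset"
    and "comm_semiring_1.irreducible times 1 0 = irreducible"
    and "comm_semiring_1.prime_elem times 1 0 = prime_elem"
    and "power.power (1 :: 'a poly) times = (^)"
proof -
  show "power.power (1 :: 'a poly) times = (^)"
  proof (intro ext)
    fix x :: "'a poly" and n :: nat
    show "power.power 1 (*) x n = x ^ n"
      by (induction n) (simp_all add: power.power.simps)
  qed
  show "dvd.dvd (times :: 'a poly \<Rightarrow> _) = Rings.dvd"
    by (simp add: dvd_dict)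
  show "comm_monoid_mult.prod_mset times 1 = prod_mset"
    by (simp add: prod_mset_dict)
  show "comm_semiring_1.irreducible times 1 0 = irreducible"
    by (simp add: irreducible_dict)
  show "comm_semiring_1.prime_elem times 1 0 = prime_elem"
    by (simp add: prime_elem_dict)
  show "class.normalization_euclidean_semiring_multiplicative divide plus minus (0 :: 'a poly) times 1
    modulo (\<lambda>p. if p = 0 then 0 else 2 ^ degree p)
    (\<lambda>p. [:lead_coeff p:]) (\<lambda>p. smult (inverse (lead_coeff p)) p)"
  proof (standard, fold dvd_dict)
    fix p :: "'a poly"
    show "[:lead_coeff p:] * smult (inverse (lead_coeff p)) p = p"
      by (cases "p = 0") simp_all
  next
    fix p :: "'a poly" assume "is_unit p"
    then show "[:lead_coeff p:] = p"
      by (elim is_unit_polyE) (auto simp: monom_0 one_poly_def field_simps)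
  next
    fix p :: "'a poly" assume "p \<noteq> 0"
    then show "is_unit [:lead_coeff p:]"
      by (simp add: is_unit_pCons_iff)
  next
    fix a b :: "'a poly" assume "is_unit a"
    thus "[:lead_coeff (a * b):] = a * [:lead_coeff b:]"
      by (auto elim!: is_unit_polyE)
  qed (auto simp: lead_coeff_mult Rings.div_mult_mod_eq intro!: degree_mod_less' degree_mult_right_le)
qed

lemma fp_prime_iff:
  fixes P :: "'a::field poly"
  shows "fp.prime P \<longleftrightarrow> irreducible P \<and> lead_coeff P = 1"
proof
  assume a: "fp.prime P"
  hence nz: "P \<noteq> 0" by (auto simp: fp.prime_def)
  from a have "smult (inverse (lead_coeff P)) P = P" by (simp add: fp.prime_def)
  hence "lead_coeff (smult (inverse (lead_coeff P)) P) = lead_coeff P" by simp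
  hence "lead_coeff P = 1" using nz by simp
  moreover have "irreducible P" using a by (simp add: fp.prime_def fp.prime_elem_iff_irreducible)
  ultimately show "irreducible P \<and> lead_coeff P = 1" by simp
next
  assume "irreducible P \<and> lead_coeff P = 1"
  thus "fp.prime P" by (simp add: fp.prime_def fp.prime_elem_iff_irreducible)
qed

lemma degree_eq_sum_prime_powers:
  fixes f :: "'a::field poly"
  assumes f: "lead_coeff f = 1"
  shows "degree f = (\<Sum>(P,k) \<in> {(P,k). irreducible P \<and> lead_coeff P = 1 \<and> 1 \<le> k \<and> P ^ k dvd f}. degree P)"
proof -
  define M where "M = fp.prime_factorization f"
  have fnz: "f \<noteq> 0" using f by auto
  have "prod_mset M = f" using fp.prod_mset_prime_factorization[OF fnz] f by (simp add: M_def)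
  also have "prod_mset M = (\<Prod>P\<in>set_mset M. P ^ count M P)" by (rule prod_mset_multiplicity)
  finally have "degree f = degree (\<Prod>P\<in>set_mset M. P ^ count M P)" by simp
  also have "\<dots> = (\<Sum>P\<in>set_mset M. degree (P ^ count M P))"
    by (intro degree_prod_sum_eq) (auto simp: M_def fp.in_prime_factors_iff fp.prime_def)
  also have "\<dots> = (\<Sum>P\<in>set_mset M. fp.multiplicity P f * degree P)"
    by (intro sum.cong refl) (auto simp: M_def fp.in_prime_factors_iff fp.count_prime_factorization_prime degree_power_eq)
  also have "\<dots> = (\<Sum>P\<in>set_mset M. \<Sum>k\<in>{1..fp.multiplicity P f}. degree P)" by simp
  also have "\<dots> = (\<Sum>(P,k) \<in> Sigma (set_mset M) (\<lambda>P. {1..fp.multiplicity P f}). degree P)"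
    by (rule sum.Sigma) auto
  also have "Sigma (set_mset M) (\<lambda>P. {1..fp.multiplicity P f}) =
      {(P,k). irreducible P \<and> lead_coeff P = 1 \<and> 1 \<le> k \<and> P ^ k dvd f}"
  proof (intro equalityI subsetI)
    fix x assume "x \<in> Sigma (set_mset M) (\<lambda>P. {1..fp.multiplicity P f})"
    then obtain P k where x: "x = (P,k)" and P: "P \<in># M" and k: "k \<in> {1..fp.multiplicity P f}" by auto
    hence pr: "fp.prime P" by (auto simp: M_def fp.in_prime_factors_iff)
    hence "\<not> is_unit P" by (auto simp: fp.prime_def)
    hence "P ^ k dvd f" using k fnz fp.power_dvd_iff_le_multiplicity[of f P k] by auto
    thus "x \<in> {(P,k). irreducible P \<and> lead_coeff P = 1 \<and> 1 \<le> k \<and> P ^ k dvd f}"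
      using pr k x by (auto simp: fp_prime_iff)
  next
    fix x assume "x \<in> {(P,k). irreducible P \<and> lead_coeff P = 1 \<and> 1 \<le> k \<and> P ^ k dvd f}"
    then obtain P k where x: "x = (P,k)" and a: "irreducible P \<and> lead_coeff P = 1 \<and> 1 \<le> k \<and> P ^ k dvd f" by auto
    hence pr: "fp.prime P" by (simp add: fp_prime_iff)
    hence nu: "\<not> is_unit P" by (auto simp: fp.prime_def)
    have "P dvd P ^ k" using a by (intro dvd_power) auto
    hence "P dvd f" using a dvd_trans by blast
    hence "P \<in># M" using pr fnz by (simp add: M_def fp.in_prime_factors_iff)
    moreover have "k \<le> fp.multiplicity P f" using a fnz nu fp.power_dvd_iff_le_multiplicity[of f P k] by auto
    ultimately show "x \<in> Sigma (set_mset M) (\<lambda>P. {1..fp.multiplicity P f})" using a x by auto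
  qed
  finally show ?thesis .
qed

end



definition Mon :: "nat \<Rightarrow> 'a::{finite,field} poly set" where
  "Mon n = {f. lead_coeff f = 1 \<and> degree f = n}"

definition Prs :: "nat \<Rightarrow> ('a::{finite,field} poly \<times> nat) set" where
  "Prs n = {(P,k). irreducible P \<and> lead_coeff P = 1 \<and> 1 \<le> k \<and> k * degree P = n}"

definition mkpoly :: "nat \<Rightarrow> (nat \<Rightarrow> 'a::comm_ring_1) \<Rightarrow> 'a poly" where
  "mkpoly n c = monom 1 n + (\<Sum>i<n. monom (c i) i)"

lemma coeff_mkpoly: "coeff (mkpoly n c) j = (if j = n then 1 else 0) + (if j < n then c j else 0)"
  by (simp add: mkpoly_def coeff_sum coeff_monom)

lemma mkpoly_Mon: "mkpoly n c \<in> Mon n"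
proof -
  have "coeff (mkpoly n c) n \<noteq> 0" by (simp add: coeff_mkpoly)
  hence "n \<le> degree (mkpoly n c)" by (rule le_degree)
  moreover have "degree (mkpoly n c) \<le> n" by (intro degree_le) (auto simp: coeff_mkpoly)
  ultimately have "degree (mkpoly n c) = n" by simp
  thus ?thesis by (simp add: Mon_def coeff_mkpoly)
qed

lemma Mon_eq_image: "Mon n = mkpoly n ` (PiE {..<n} (\<lambda>_. UNIV))"
proof (intro equalityI subsetI)
  fix f :: "'a poly" assume f: "f \<in> Mon n"
  have "f = mkpoly n (restrict (coeff f) {..<n})"
  proof (rule poly_eqI)
    fix j
    show "coeff f j = coeff (mkpoly n (restrict (coeff f) {..<n})) j"
    proof -
      have df: "degree f = n" and lf: "lead_coeff f = 1" using f by (auto simp: Mon_def)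
      consider "j < n" | "j = n" | "j > n" by linarith
      thus ?thesis
      proof cases
        case 1 thus ?thesis by (simp add: coeff_mkpoly)
      next
        case 2 thus ?thesis using df lf by (simp add: coeff_mkpoly)
      next
        case 3 thus ?thesis using df by (simp add: coeff_mkpoly coeff_eq_0)
      qed
    qed
  qed
  thus "f \<in> mkpoly n ` (PiE {..<n} (\<lambda>_. UNIV))" by (rule image_eqI[where x="restrict (coeff f) {..<n}"]) auto
next
  fix f assume "f \<in> mkpoly n ` (PiE {..<n} (\<lambda>_. UNIV :: 'a set))"
  thus "f \<in> Mon n" using mkpoly_Mon by blast
qed

lemma inj_mkpoly: "inj_on (mkpoly n) (PiE {..<n} (\<lambda>_. UNIV))"
proof (rule inj_onI)
  fix c d assume c: "c \<in> PiE {..<n} (\<lambda>_. UNIV)" and d: "d \<in> PiE {..<n} (\<lambda>_. UNIV)"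
    and eq: "mkpoly n c = mkpoly n d"
  show "c = d"
  proof (rule ext)
    fix i
    show "c i = d i"
    proof (cases "i < n")
      case True
      have "coeff (mkpoly n c) i = coeff (mkpoly n d) i" using eq by simp
      thus ?thesis using True by (simp add: coeff_mkpoly)
    next
      case False
      thus ?thesis using c d by (auto simp: PiE_def extensional_def)
    qed
  qed
qed

lemma finite_Mon: "finite (Mon n)"
  unfolding Mon_eq_image by (intro finite_imageI finite_PiE) auto

lemma card_Mon: "card (Mon n :: 'a::{finite,field} poly set) = CARD('a) ^ n"
  by (simp add: Mon_eq_image card_image[OF inj_mkpoly] card_PiE)

lemma irreducible_degree_pos:
  fixes P :: "'a::field poly"
  assumes "irreducible P" shows "degree P \<ge> 1"
proof -
  have "P \<noteq> 0" "\<not> is_unit P" using assms by (auto simp: irreducible_def)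
  thus ?thesis using is_unit_iff_degree[of P] by linarith
qed

lemma finite_Prs: "finite (Prs n :: ('a::{finite,field} poly \<times> nat) set)"
proof -
  have "(Prs n :: ('a poly \<times> nat) set) \<subseteq> (\<Union>d\<le>n. Mon d) \<times> {..n}"
  proof (rule subsetI)
    fix x assume "x \<in> (Prs n :: ('a poly \<times> nat) set)"
    then obtain P k where x: "x = (P,k)" and a: "irreducible P" "lead_coeff P = 1" "1 \<le> k" "k * degree P = n"
      by (auto simp: Prs_def)
    have dP: "degree P \<ge> 1" using a(1) by (rule irreducible_degree_pos)
    have "1 * degree P \<le> k * degree P" using a(3) by (rule mult_le_mono1)
    hence "degree P \<le> n" using a(4) by simp
    moreover have "k * 1 \<le> k * degree P" using dP by (rule mult_le_mono2)
    hence "k \<le> n" using a(4) by simp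
    ultimately show "x \<in> (\<Union>d\<le>n. Mon d) \<times> {..n}" using a x by (auto simp: Mon_def)
  qed
  moreover have "finite ((\<Union>d\<le>n. Mon d) \<times> {..n} :: ('a poly \<times> nat) set)"
    by (auto simp: finite_Mon)
  ultimately show ?thesis by (rule finite_subset)
qed


lemma w_power:
  fixes w :: "'a::field poly \<Rightarrow> 'r::comm_ring_1"
  assumes mult: "\<And>f g. lead_coeff f = 1 \<Longrightarrow> lead_coeff g = 1 \<Longrightarrow> w (f*g) = w f * w g"
    and w1: "w 1 = 1" and P: "lead_coeff P = 1"
  shows "w (P ^ k) = w P ^ k"
proof (induction k)
  case (Suc k)
  have "w (P ^ Suc k) = w (P * P ^ k)" by simp
  also have "\<dots> = w P * w (P ^ k)" using P by (intro mult) (auto simp: lead_coeff_power)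
  finally show ?case using Suc by simp
qed (simp add: w1)

lemma sum_Mon_dvd:
  fixes w :: "'a::{finite,field} poly \<Rightarrow> 'r::comm_ring_1"
  assumes mult: "\<And>f g. lead_coeff f = 1 \<Longrightarrow> lead_coeff g = 1 \<Longrightarrow> w (f*g) = w f * w g"
    and w1: "w 1 = 1" and P: "lead_coeff P = 1" and kn: "k * degree P \<le> n"
  shows "(\<Sum>f\<in>{f\<in>Mon n. P ^ k dvd f}. w f) = w P ^ k * (\<Sum>h\<in>Mon (n - k * degree P). w h)"
proof -
  have lPk: "lead_coeff (P ^ k) = 1" using P by (simp add: lead_coeff_power)
  have P0: "P \<noteq> 0" using P by auto
  hence Pk0: "P ^ k \<noteq> 0" by simp
  have dPk: "degree (P ^ k) = k * degree P" using P0 by (simp add: degree_power_eq mult.commute)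
  have img: "{f\<in>Mon n. P ^ k dvd f} = (\<lambda>h. P ^ k * h) ` Mon (n - k * degree P)"
  proof (intro equalityI subsetI)
    fix f assume "f \<in> {f\<in>Mon n. P ^ k dvd f}"
    hence f: "lead_coeff f = 1" "degree f = n" "P ^ k dvd f" by (auto simp: Mon_def)
    then obtain h where h: "f = P ^ k * h" by (auto elim: dvdE)
    have h0: "h \<noteq> 0" using f h by auto
    have "lead_coeff h = 1" using f(1) h lPk by (simp add: lead_coeff_mult)
    moreover have "degree h = n - k * degree P" using f(2) h Pk0 h0 dPk by (simp add: degree_mult_eq)
    ultimately show "f \<in> (\<lambda>h. P ^ k * h) ` Mon (n - k * degree P)" using h by (auto simp: Mon_def)
  next
    fix f assume "f \<in> (\<lambda>h. P ^ k * h) ` Mon (n - k * degree P)"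
    then obtain h where h: "f = P ^ k * h" "h \<in> Mon (n - k * degree P)" by blast
    hence h: "f = P ^ k * h" "lead_coeff h = 1" "degree h = n - k * degree P"
      by (auto simp: Mon_def)
    have h0: "h \<noteq> 0" using h by auto
    have "lead_coeff f = 1" using h lPk by (simp add: lead_coeff_mult)
    moreover have "degree f = n" using h Pk0 h0 dPk kn by (simp add: degree_mult_eq)
    ultimately show "f \<in> {f\<in>Mon n. P ^ k dvd f}" using h by (auto simp: Mon_def)
  qed
  have inj: "inj_on (\<lambda>h. P ^ k * h) (Mon (n - k * degree P))"
    using Pk0 by (auto intro: inj_onI)
  have "(\<Sum>f\<in>{f\<in>Mon n. P ^ k dvd f}. w f) = (\<Sum>h\<in>Mon (n - k * degree P). w (P ^ k * h))"
    unfolding img by (rule sum.reindex[OF inj, unfolded comp_def])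
  also have "\<dots> = (\<Sum>h\<in>Mon (n - k * degree P). w P ^ k * w h)"
    by (intro sum.cong refl) (auto simp: Mon_def mult[OF lPk] w_power[OF mult w1 P])
  finally show ?thesis by (simp add: sum_distrib_left)
qed

lemma recursion:
  fixes w :: "'a::{finite,field} poly \<Rightarrow> 'r::comm_ring_1"
  assumes mult: "\<And>f g. lead_coeff f = 1 \<Longrightarrow> lead_coeff g = 1 \<Longrightarrow> w (f*g) = w f * w g"
    and w1: "w 1 = 1"
  shows "of_nat n * (\<Sum>f\<in>Mon n. w f) =
    (\<Sum>m\<in>{1..n}. (\<Sum>x\<in>Prs m. of_nat (degree (fst x)) * w (fst x) ^ snd x) * (\<Sum>f\<in>Mon (n-m). w f))"
proof -
  define PU :: "('a poly \<times> nat) set" where "PU = (\<Union>m\<in>{1..n}. Prs m)"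
  have finPU: "finite PU" unfolding PU_def by (intro finite_UN_I finite_atLeastAtMost finite_Prs)
  have PU_iff: "x \<in> PU \<longleftrightarrow> irreducible (fst x) \<and> lead_coeff (fst x) = 1 \<and> 1 \<le> snd x \<and> snd x * degree (fst x) \<le> n" for x
  proof -
    have "x \<in> PU \<longleftrightarrow> (\<exists>m\<in>{1..n}. x \<in> Prs m)" by (simp add: PU_def)
    also have "\<dots> \<longleftrightarrow> irreducible (fst x) \<and> lead_coeff (fst x) = 1 \<and> 1 \<le> snd x \<and> snd x * degree (fst x) \<le> n"
    proof
      assume "\<exists>m\<in>{1..n}. x \<in> Prs m"
      thus "irreducible (fst x) \<and> lead_coeff (fst x) = 1 \<and> 1 \<le> snd x \<and> snd x * degree (fst x) \<le> n"
        by (auto simp: Prs_def)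
    next
      assume a: "irreducible (fst x) \<and> lead_coeff (fst x) = 1 \<and> 1 \<le> snd x \<and> snd x * degree (fst x) \<le> n"
      hence "degree (fst x) \<ge> 1" using irreducible_degree_pos by blast
      hence "1 * 1 \<le> snd x * degree (fst x)" using a by (intro mult_le_mono) auto
      hence "snd x * degree (fst x) \<in> {1..n}" using a by auto
      moreover have "x \<in> Prs (snd x * degree (fst x))" using a by (cases x) (auto simp: Prs_def)
      ultimately show "\<exists>m\<in>{1..n}. x \<in> Prs m" by blast
    qed
    finally show ?thesis .
  qed
  have step1: "of_nat n * w f = (\<Sum>x\<in>{x\<in>PU. fst x ^ snd x dvd f}. of_nat (degree (fst x)) * w f)"
    if f: "f \<in> Mon n" for f
  proof -
    have lf: "lead_coeff f = 1" and df: "degree f = n" using f by (auto simp: Mon_def)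
    have f0: "f \<noteq> 0" using lf by auto
    have S: "{(P,k). irreducible P \<and> lead_coeff P = 1 \<and> 1 \<le> k \<and> P ^ k dvd f} = {x\<in>PU. fst x ^ snd x dvd f}"
    proof (intro equalityI subsetI)
      fix x assume "x \<in> {(P,k). irreducible P \<and> lead_coeff P = 1 \<and> 1 \<le> k \<and> P ^ k dvd f}"
      then obtain P k where x: "x = (P,k)" and a: "irreducible P" "lead_coeff P = 1" "1 \<le> k" "P ^ k dvd f" by auto
      have "P ^ k \<noteq> 0" using a by auto
      hence "degree (P ^ k) \<le> degree f" using a(4) f0 by (intro dvd_imp_degree)
      moreover have "P \<noteq> 0" using a by auto
      ultimately have "k * degree P \<le> n" using df by (simp add: degree_power_eq mult.commute)
      thus "x \<in> {x\<in>PU. fst x ^ snd x dvd f}" using a x by (simp add: PU_iff)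
    next
      fix x assume "x \<in> {x\<in>PU. fst x ^ snd x dvd f}"
      thus "x \<in> {(P,k). irreducible P \<and> lead_coeff P = 1 \<and> 1 \<le> k \<and> P ^ k dvd f}"
        by (cases x) (auto simp: PU_iff)
    qed
    have "n = (\<Sum>(P,k) \<in> {(P,k). irreducible P \<and> lead_coeff P = 1 \<and> 1 \<le> k \<and> P ^ k dvd f}. degree P)"
      using degree_eq_sum_prime_powers[OF lf] df by simp
    also have "\<dots> = (\<Sum>x\<in>{x\<in>PU. fst x ^ snd x dvd f}. degree (fst x))"
      unfolding S by (simp add: case_prod_beta)
    finally have "of_nat n = (of_nat (\<Sum>x\<in>{x\<in>PU. fst x ^ snd x dvd f}. degree (fst x)) :: 'r)" by simp
    thus ?thesis by (simp add: sum_distrib_right)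
  qed
  have "of_nat n * (\<Sum>f\<in>Mon n. w f) = (\<Sum>f\<in>Mon n. of_nat n * w f)" by (rule sum_distrib_left)
  also have "\<dots> = (\<Sum>f\<in>Mon n. \<Sum>x\<in>{x\<in>PU. fst x ^ snd x dvd f}. of_nat (degree (fst x)) * w f)"
    by (intro sum.cong refl step1)
  also have "\<dots> = (\<Sum>x\<in>PU. \<Sum>f\<in>{f\<in>Mon n. fst x ^ snd x dvd f}. of_nat (degree (fst x)) * w f)"
    by (rule sum.swap_restrict[OF finite_Mon finPU])
  also have "\<dots> = (\<Sum>x\<in>PU. of_nat (degree (fst x)) * (w (fst x) ^ snd x * (\<Sum>h\<in>Mon (n - snd x * degree (fst x)). w h)))"
  proof (intro sum.cong refl)
    fix x assume "x \<in> PU"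
    hence a: "lead_coeff (fst x) = 1" "snd x * degree (fst x) \<le> n" by (auto simp: PU_iff)
    show "(\<Sum>f\<in>{f\<in>Mon n. fst x ^ snd x dvd f}. of_nat (degree (fst x)) * w f) =
          of_nat (degree (fst x)) * (w (fst x) ^ snd x * (\<Sum>h\<in>Mon (n - snd x * degree (fst x)). w h))"
      by (simp only: sum_distrib_left[symmetric] sum_Mon_dvd[OF mult w1 a])
  qed
  also have "\<dots> = (\<Sum>m\<in>{1..n}. \<Sum>x\<in>Prs m. of_nat (degree (fst x)) * (w (fst x) ^ snd x * (\<Sum>h\<in>Mon (n - snd x * degree (fst x)). w h)))"
    unfolding PU_def
  proof (rule sum.UNION_disjoint)
    have "x \<in> Prs i \<Longrightarrow> snd x * degree (fst x) = i" for x :: "'a poly \<times> nat" and i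
      by (auto simp: Prs_def)
    thus "\<forall>i\<in>{1..n}. \<forall>j\<in>{1..n}. i \<noteq> j \<longrightarrow> Prs i \<inter> (Prs j :: ('a poly \<times> nat) set) = {}"
      by blast
    show "finite {1..n}" by simp
    show "\<forall>i\<in>{1..n}. finite (Prs i :: ('a poly \<times> nat) set)" using finite_Prs by blast
  qed
  also have "\<dots> = (\<Sum>m\<in>{1..n}. \<Sum>x\<in>Prs m. of_nat (degree (fst x)) * w (fst x) ^ snd x * (\<Sum>h\<in>Mon (n - m). w h))"
    by (intro sum.cong refl) (auto simp: Prs_def mult.assoc)
  also have "\<dots> = (\<Sum>m\<in>{1..n}. (\<Sum>x\<in>Prs m. of_nat (degree (fst x)) * w (fst x) ^ snd x) * (\<Sum>f\<in>Mon (n-m). w f))"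
    by (simp only: sum_distrib_right)
  finally show ?thesis .
qed


lemma count_Prs:
  assumes "n \<ge> 1"
  shows "(\<Sum>x\<in>(Prs n :: ('a::{finite,field} poly \<times> nat) set). degree (fst x)) = CARD('a) ^ n"
proof -
  define N where "N m = (\<Sum>x\<in>(Prs m :: ('a poly \<times> nat) set). int (degree (fst x)))" for m
  define q where "q = int CARD('a)"
  have rec: "int m * q ^ m = (\<Sum>j\<in>{1..m}. N j * q ^ (m - j))" for m
  proof -
    have "of_nat m * (\<Sum>f\<in>(Mon m :: 'a poly set). (1::int)) =
      (\<Sum>j\<in>{1..m}. (\<Sum>x\<in>(Prs j :: ('a poly \<times> nat) set). of_nat (degree (fst x)) * 1 ^ snd x) * (\<Sum>f\<in>(Mon (m-j) :: 'a poly set). 1))"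
      by (rule recursion) auto
    thus ?thesis by (simp add: card_Mon N_def q_def)
  qed
  have "\<forall>m. 1 \<le> m \<and> m \<le> n \<longrightarrow> N m = q ^ m"
  proof (induction n)
    case 0 thus ?case by simp
  next
    case (Suc n)
    show ?case
    proof (intro allI impI)
      fix m assume m: "1 \<le> m \<and> m \<le> Suc n"
      show "N m = q ^ m"
      proof (cases "m \<le> n")
        case True thus ?thesis using Suc m by blast
      next
        case False
        hence mn: "m = Suc n" using m by simp
        have "int m * q ^ m = (\<Sum>j\<in>{1..m}. N j * q ^ (m - j))" by (rule rec)
        also have "{1..m} = insert m {1..n}" using mn by auto
        also have "(\<Sum>j\<in>insert m {1..n}. N j * q ^ (m - j)) = N m + (\<Sum>j\<in>{1..n}. N j * q ^ (m - j))"
          using mn by simp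
        also have "(\<Sum>j\<in>{1..n}. N j * q ^ (m - j)) = (\<Sum>j\<in>{1..n}. q ^ m)"
        proof (intro sum.cong refl)
          fix j assume j: "j \<in> {1..n}"
          hence "N j = q ^ j" using Suc by auto
          thus "N j * q ^ (m - j) = q ^ m" using j mn by (simp add: power_add[symmetric])
        qed
        also have "\<dots> = int n * q ^ m" by simp
        finally have "int m * q ^ m = N m + int n * q ^ m" .
        thus ?thesis using mn by (simp add: algebra_simps)
      qed
    qed
  qed
  hence "N n = q ^ n" using assms by blast
  hence "int (\<Sum>x\<in>(Prs n :: ('a poly \<times> nat) set). degree (fst x)) = int (CARD('a) ^ n)"
    by (simp add: N_def q_def)
  thus ?thesis by (simp only: of_nat_eq_iff)
qed


typedef 'a mw = "UNIV :: 'a set" morphisms unmw MW by auto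

lemma MW_inverse' [simp]: "unmw (MW x) = x" by (simp add: MW_inverse)
lemma MW_inj [simp]: "MW x = MW y \<longleftrightarrow> x = y" by (metis MW_inverse')

instantiation mw :: (comm_monoid_mult) comm_monoid_add
begin
definition zero_mw :: "'a mw" where "zero_mw = MW 1"
definition plus_mw :: "'a mw \<Rightarrow> 'a mw \<Rightarrow> 'a mw" where "plus_mw a b = MW (unmw a * unmw b)"
instance
proof
  fix a b c :: "'a mw"
  show "a + b + c = a + (b + c)" by (simp add: plus_mw_def mult.assoc)
  show "a + b = b + a" by (simp add: plus_mw_def mult.commute)
  show "0 + a = a" by (simp add: plus_mw_def zero_mw_def unmw_inverse)
qed
end

lemma MW_plus: "MW x + MW y = MW (x * y)" by (simp add: plus_mw_def)
lemma MW_one: "MW 1 = 0" by (simp add: zero_mw_def)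

lemma single_MW_mult:
  "Poly_Mapping.single (MW x) a * Poly_Mapping.single (MW y) b = Poly_Mapping.single (MW (x * y)) (a * b :: 'b::comm_semiring_1)"
  by (simp add: mult_single MW_plus)


type_synonym 'a galg = "'a mw \<Rightarrow>\<^sub>0 complex"

definition lam :: "('a::field \<Rightarrow> complex) \<Rightarrow> 'a poly \<Rightarrow> 'a galg" where
  "lam \<psi> f = Poly_Mapping.single (MW ((-1) ^ degree f * coeff f 0)) (\<psi> (- coeff (reflect_poly f) 1))"

definition gam :: "('a::{finite,field} \<Rightarrow> complex) \<Rightarrow> 'a galg" where
  "gam \<psi> = (\<Sum>s\<in>UNIV. Poly_Mapping.single (MW s) (\<psi> s))"

locale addchar =
  fixes \<psi> :: "'a::{finite,field} \<Rightarrow> complex"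
  assumes char_add: "\<And>x y. \<psi> (x + y) = \<psi> x * \<psi> y"
    and psi0: "\<psi> 0 = 1"
    and nontriv: "\<exists>x. \<psi> x \<noteq> 1"
begin

lemma coeff_reflect_1_mult:
  fixes f g :: "'a poly"
  assumes "lead_coeff f = 1" "lead_coeff g = 1"
  shows "coeff (reflect_poly (f * g)) 1 = coeff (reflect_poly f) 1 + coeff (reflect_poly g) 1"
proof -
  have "coeff (reflect_poly (f * g)) 1 = coeff (reflect_poly f * reflect_poly g) 1"
    by (simp add: reflect_poly_mult)
  also have "\<dots> = (\<Sum>i\<le>1. coeff (reflect_poly f) i * coeff (reflect_poly g) (1 - i))"
    by (rule coeff_mult)
  also have "\<dots> = coeff (reflect_poly f) 0 * coeff (reflect_poly g) 1 + coeff (reflect_poly f) 1 * coeff (reflect_poly g) 0"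
    by (simp add: atMost_Suc)
  finally show ?thesis using assms by simp
qed

lemma lam_mult:
  assumes "lead_coeff f = 1" "lead_coeff g = 1"
  shows "lam \<psi> (f * g) = lam \<psi> f * lam \<psi> g"
proof -
  have f0: "f \<noteq> 0" and g0: "g \<noteq> 0" using assms by auto
  have "lam \<psi> f * lam \<psi> g = Poly_Mapping.single (MW ((-1) ^ degree f * coeff f 0 * ((-1) ^ degree g * coeff g 0)))
     (\<psi> (- coeff (reflect_poly f) 1) * \<psi> (- coeff (reflect_poly g) 1))"
    unfolding lam_def by (rule single_MW_mult)
  also have "\<psi> (- coeff (reflect_poly f) 1) * \<psi> (- coeff (reflect_poly g) 1) = \<psi> (- coeff (reflect_poly (f * g)) 1)"
  proof -
    have e: "- coeff (reflect_poly (f*g)) 1 = (- coeff (reflect_poly f) 1) + (- coeff (reflect_poly g) 1)"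
      using coeff_reflect_1_mult[OF assms] by simp
    show ?thesis by (simp only: e char_add)
  qed
  also have "(-1) ^ degree f * coeff f 0 * ((-1) ^ degree g * coeff g 0) = (-1) ^ degree (f * g) * coeff (f * g) 0"
    using f0 g0 by (simp add: degree_mult_eq coeff_mult_0 power_add algebra_simps)
  finally show ?thesis by (simp add: lam_def)
qed

lemma lam_one: "lam \<psi> 1 = 1"
  by (simp add: lam_def psi0 MW_one)

lemma L0: "(\<Sum>f\<in>Mon 0. lam \<psi> f) = 1"
proof -
  have "Mon 0 = {1 :: 'a poly}"
    by (auto simp: Mon_def elim!: degree_eq_zeroE)
  thus ?thesis by (simp add: lam_one)
qed

lemma L1: "(\<Sum>f\<in>Mon 1. lam \<psi> f) = gam \<psi>"
proof -
  have img: "Mon 1 = (\<lambda>s. [:-s, 1:]) ` (UNIV :: 'a set)"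
  proof (intro equalityI subsetI)
    fix f :: "'a poly" assume "f \<in> Mon 1"
    hence f: "degree f = 1" "lead_coeff f = 1" by (auto simp: Mon_def)
    have "f = [:- (- coeff f 0), 1:]"
    proof (rule poly_eqI)
      fix n show "coeff f n = coeff [:- (- coeff f 0), 1:] n"
        using f by (cases n) (auto simp: coeff_pCons coeff_eq_0 split: nat.split)
    qed
    thus "f \<in> (\<lambda>s. [:-s, 1:]) ` UNIV" by (rule image_eqI) simp
  qed (auto simp: Mon_def)
  have inj: "inj (\<lambda>s::'a. [:-s, 1:])" by (auto intro: injI)
  have "(\<Sum>f\<in>Mon 1. lam \<psi> f) = (\<Sum>s\<in>UNIV. lam \<psi> [:-s, 1:])"
    unfolding img by (rule sum.reindex[OF inj, unfolded comp_def])
  also have "\<dots> = gam \<psi>"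
    unfolding gam_def by (intro sum.cong refl) (simp add: lam_def coeff_reflect_poly)
  finally show ?thesis .
qed

lemma L1': "(\<Sum>f\<in>Mon (Suc 0). lam \<psi> f) = gam \<psi>"
  using L1 by simp

lemma Ln_zero:
  assumes n: "n \<ge> 2"
  shows "(\<Sum>f\<in>Mon n. lam \<psi> f) = 0"
proof -
  obtain x where x: "\<psi> x \<noteq> 1" using nontriv by blast
  define c where "c = - x"
  define \<sigma> where "\<sigma> f = f + monom c (n - 1)" for f :: "'a poly"
  have coeff_\<sigma>: "coeff (\<sigma> f) j = coeff f j + (if j = n - 1 then c else 0)" for f j
    by (simp add: \<sigma>_def coeff_monom)
  have \<sigma>Mon: "\<sigma> f \<in> Mon n" if f: "f \<in> Mon n" for f
  proof -
    have df: "degree f = n" and lf: "lead_coeff f = 1" using f by (auto simp: Mon_def)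
    have "coeff (\<sigma> f) n = 1" using lf df n by (simp add: coeff_\<sigma>)
    hence "n \<le> degree (\<sigma> f)" by (intro le_degree) simp
    moreover have "degree (\<sigma> f) \<le> n" using df n by (intro degree_le) (auto simp: coeff_\<sigma> coeff_eq_0)
    ultimately have "degree (\<sigma> f) = n" by simp
    thus ?thesis using \<open>coeff (\<sigma> f) n = 1\<close> by (simp add: Mon_def)
  qed
  have lam\<sigma>: "Poly_Mapping.lookup (lam \<psi> (\<sigma> f)) k = \<psi> x * Poly_Mapping.lookup (lam \<psi> f) k" if f: "f \<in> Mon n" for f k
  proof -
    have df: "degree f = n" using f by (auto simp: Mon_def)
    have d\<sigma>: "degree (\<sigma> f) = n" using \<sigma>Mon[OF f] by (simp add: Mon_def)
    have c0: "coeff (\<sigma> f) 0 = coeff f 0" using n by (simp add: coeff_\<sigma>)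
    have r\<sigma>: "coeff (reflect_poly (\<sigma> f)) 1 = coeff (reflect_poly f) 1 + c"
      using n df d\<sigma> by (simp add: coeff_reflect_poly coeff_\<sigma>)
    have "\<psi> (- coeff (reflect_poly (\<sigma> f)) 1) = \<psi> x * \<psi> (- coeff (reflect_poly f) 1)"
      unfolding r\<sigma> c_def by (simp add: char_add[symmetric])
    thus ?thesis using df d\<sigma> c0 by (cases "k = MW ((-1) ^ n * coeff f 0)") (simp_all add: lam_def lookup_single_not_eq)
  qed
  have bij: "bij_betw \<sigma> (Mon n) (Mon n)"
  proof (rule bij_betw_byWitness[where f'="\<lambda>f. f - monom c (n - 1)"])
    show "\<forall>a\<in>Mon n. \<sigma> a - monom c (n - 1) = a" by (simp add: \<sigma>_def)
    show "\<forall>a'\<in>Mon n. \<sigma> (a' - monom c (n - 1)) = a'" by (simp add: \<sigma>_def)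
    show "\<sigma> ` Mon n \<subseteq> Mon n" using \<sigma>Mon by blast
    show "(\<lambda>f. f - monom c (n - 1)) ` Mon n \<subseteq> Mon n"
    proof
      fix g assume "g \<in> (\<lambda>f. f - monom c (n - 1)) ` Mon n"
      then obtain f where f: "f \<in> Mon n" and g: "g = f - monom c (n - 1)" by auto
      have cg: "coeff g j = coeff f j - (if j = n - 1 then c else 0)" for j
        by (simp add: g coeff_monom)
      have df: "degree f = n" and lf: "lead_coeff f = 1" using f by (auto simp: Mon_def)
      have "coeff g n = 1" using lf df n by (simp add: cg)
      hence "n \<le> degree g" by (intro le_degree) simp
      moreover have "degree g \<le> n" using df n by (intro degree_le) (auto simp: cg coeff_eq_0)
      ultimately have "degree g = n" by simp
      thus "g \<in> Mon n" using \<open>coeff g n = 1\<close> by (simp add: Mon_def)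
    qed
  qed
  show ?thesis
  proof (rule poly_mapping_eqI)
    fix k
    define S where "S = (\<Sum>f\<in>Mon n. Poly_Mapping.lookup (lam \<psi> f) k)"
    have "S = (\<Sum>f\<in>Mon n. Poly_Mapping.lookup (lam \<psi> (\<sigma> f)) k)"
      unfolding S_def using sum.reindex_bij_betw[OF bij, of "\<lambda>f. Poly_Mapping.lookup (lam \<psi> f) k"] by simp
    also have "\<dots> = \<psi> x * S" unfolding S_def by (simp add: lam\<sigma> sum_distrib_left)
    finally have "(1 - \<psi> x) * S = 0" by (simp add: algebra_simps)
    hence "S = 0" using x by simp
    thus "Poly_Mapping.lookup (\<Sum>f\<in>Mon n. lam \<psi> f) k = Poly_Mapping.lookup 0 k" by (simp add: S_def lookup_sum)
  qed
qed

lemma N_formula: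
  assumes "n \<ge> 1"
  shows "(\<Sum>x\<in>(Prs n :: ('a poly \<times> nat) set). of_nat (degree (fst x)) * lam \<psi> (fst x) ^ snd x) = - ((- gam \<psi>) ^ n)"
  using assms
proof (induction n rule: dec_induct)
  define N where "N m = (\<Sum>x\<in>(Prs m :: ('a poly \<times> nat) set). of_nat (degree (fst x)) * lam \<psi> (fst x) ^ snd x)" for m
  define L where "L m = (\<Sum>f\<in>(Mon m :: 'a poly set). lam \<psi> f)" for m
  have rec: "of_nat m * L m = (\<Sum>j\<in>{1..m}. N j * L (m - j))" for m
    unfolding N_def L_def by (rule recursion) (auto intro: lam_mult lam_one)
  {
    case base
    have "of_nat 1 * L 1 = (\<Sum>j\<in>{1..1}. N j * L (1 - j))" by (rule rec)
    hence "N 1 = gam \<psi>" by (simp add: L_def L0 L1 L1')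
    thus ?case by (simp add: N_def)
  next
    case (step n)
    have n1: "n \<ge> 1" using step by simp
    have "of_nat (Suc n) * L (Suc n) = (\<Sum>j\<in>{1..Suc n}. N j * L (Suc n - j))" by (rule rec)
    moreover have "L (Suc n) = 0" unfolding L_def using n1 by (intro Ln_zero) simp
    moreover have "(\<Sum>j\<in>{1..Suc n}. N j * L (Suc n - j)) =
        N (Suc n) * L 0 + (N n * L (Suc 0) + (\<Sum>j\<in>{1..n-1}. N j * L (Suc n - j)))"
    proof -
      have S: "{1..Suc n} = insert (Suc n) (insert n {1..n-1})" using n1 by auto
      show ?thesis unfolding S using n1 by (subst sum.insert; simp)+
    qed
    moreover have "(\<Sum>j\<in>{1..n-1}. N j * L (Suc n - j)) = 0"
    proof (intro sum.neutral ballI)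
      fix j assume "j \<in> {1..n-1}"
      hence "L (Suc n - j) = 0" unfolding L_def by (intro Ln_zero) auto
      thus "N j * L (Suc n - j) = 0" by simp
    qed
    ultimately have "0 = N (Suc n) * L 0 + N n * L (Suc 0)" by simp
    hence "N (Suc n) = - (N n * gam \<psi>)" by (simp add: L_def L0 L1 L1' eq_neg_iff_add_eq_0 add.commute)
    also have "N n = - ((- gam \<psi>) ^ n)" using step by (simp add: N_def)
    finally show ?case by (simp add: N_def algebra_simps)
  }
qed

end


lemma map_poly_hom_mult:
  fixes h :: "'a::comm_ring_1 \<Rightarrow> 'b::comm_ring_1"
  assumes add: "\<And>x y. h (x + y) = h x + h y" and mult: "\<And>x y. h (x * y) = h x * h y" and h0: "h 0 = 0"
  shows "map_poly h (p * q) = map_poly h p * map_poly h q"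
proof (rule poly_eqI)
  fix n
  have hs: "h (sum g A) = (\<Sum>x\<in>A. h (g x))" for g :: "nat \<Rightarrow> 'a" and A
    by (induction A rule: infinite_finite_induct) (auto simp: add h0)
  show "coeff (map_poly h (p * q)) n = coeff (map_poly h p * map_poly h q) n"
    by (simp add: coeff_map_poly h0 coeff_mult hs mult)
qed

lemma map_poly_hom_prod:
  fixes h :: "'a::comm_ring_1 \<Rightarrow> 'b::comm_ring_1"
  assumes add: "\<And>x y. h (x + y) = h x + h y" and mult: "\<And>x y. h (x * y) = h x * h y" and h0: "h 0 = 0"
    and h1: "h 1 = 1"
  shows "map_poly h (prod f A) = (\<Prod>x\<in>A. map_poly h (f x))"
  by (induction A rule: infinite_finite_induct) (auto simp: map_poly_hom_mult[OF add mult h0] h1)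

lemma map_poly_hom_power:
  fixes h :: "'a::comm_ring_1 \<Rightarrow> 'b::comm_ring_1"
  assumes add: "\<And>x y. h (x + y) = h x + h y" and mult: "\<And>x y. h (x * y) = h x * h y" and h0: "h 0 = 0"
    and h1: "h 1 = 1"
  shows "map_poly h (p ^ k) = map_poly h p ^ k"
  by (induction k) (auto simp: map_poly_hom_mult[OF add mult h0] h1)

context kfe
begin

lemma frob_mult: "(x * y :: 'e) ^ (CARD('f) ^ i) = x ^ (CARD('f) ^ i) * y ^ (CARD('f) ^ i)"
  by (simp add: power_mult_distrib)

lemma poly_frob:
  "poly (map_poly \<iota> P) (y ^ (CARD('f) ^ i)) = poly (map_poly \<iota> P) y ^ (CARD('f) ^ i)"
proof -
  have "poly (map_poly \<iota> P) y ^ (CARD('f) ^ i) = (\<Sum>k\<le>degree (map_poly \<iota> P). coeff (map_poly \<iota> P) k * y ^ k) ^ (CARD('f) ^ i)"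
    by (simp add: poly_altdef)
  also have "\<dots> = (\<Sum>k\<le>degree (map_poly \<iota> P). (coeff (map_poly \<iota> P) k * y ^ k) ^ (CARD('f) ^ i))"
    by (rule frob_sum)
  also have "\<dots> = (\<Sum>k\<le>degree (map_poly \<iota> P). coeff (map_poly \<iota> P) k * (y ^ (CARD('f) ^ i)) ^ k)"
    by (intro sum.cong refl) (simp add: power_mult_distrib coeff_map_poly frob_hom power_mult[symmetric] mult.commute)
  also have "\<dots> = poly (map_poly \<iota> P) (y ^ (CARD('f) ^ i))"
    by (simp add: poly_altdef)
  finally show ?thesis ..
qed

lemma degree_map_hom [simp]: "degree (map_poly \<iota> p) = degree p"
  by (rule degree_map_poly) simp

lemma lead_coeff_map_hom [simp]: "lead_coeff (map_poly \<iota> p) = \<iota> (lead_coeff p)"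
  by (simp add: coeff_map_poly)

lemma map_hom_mult: "map_poly \<iota> (p * q) = map_poly \<iota> p * map_poly \<iota> q"
  by (rule map_poly_hom_mult) (auto simp: hom_add hom_mult)

lemma map_hom_power: "map_poly \<iota> (p ^ k) = map_poly \<iota> p ^ k"
  by (rule map_poly_hom_power) (auto simp: hom_add hom_mult hom_one)

definition ordt :: "'e \<Rightarrow> nat" where
  "ordt t = (LEAST e. 0 < e \<and> t ^ (CARD('f) ^ e) = t)"

lemma frob_frob: "(t ^ (CARD('f) ^ i)) ^ (CARD('f) ^ j) = (t::'e) ^ (CARD('f) ^ (i + j))"
  by (simp add: power_mult[symmetric] power_add)

lemma ordt: "0 < ordt t" "t ^ (CARD('f) ^ ordt t) = t"
proof -
  have ex: "0 < r \<and> t ^ (CARD('f) ^ r) = t" using r_pos frob_r by simp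
  show "0 < ordt t" "t ^ (CARD('f) ^ ordt t) = t"
    unfolding ordt_def using LeastI[of "\<lambda>e. 0 < e \<and> t ^ (CARD('f) ^ e) = t", OF ex] by auto
qed

lemma ordt_min: "0 < e \<Longrightarrow> e < ordt t \<Longrightarrow> t ^ (CARD('f) ^ e) \<noteq> t"
  unfolding ordt_def using not_less_Least by blast

lemma frob_periodic: "t ^ (CARD('f) ^ (i + ordt t)) = (t::'e) ^ (CARD('f) ^ i)"
proof -
  have "t ^ (CARD('f) ^ (i + ordt t)) = (t ^ (CARD('f) ^ ordt t)) ^ (CARD('f) ^ i)"
    by (simp add: frob_frob add.commute)
  thus ?thesis using ordt(2) by simp
qed

lemma frob_mod: "t ^ (CARD('f) ^ i) = (t::'e) ^ (CARD('f) ^ (i mod ordt t))"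
proof (induction i rule: nat_less_induct)
  case (1 i)
  show ?case
  proof (cases "i < ordt t")
    case True thus ?thesis by simp
  next
    case False
    then obtain j where j: "i = j + ordt t" by (metis add.commute le_Suc_ex not_less)
    have "j < i" using j ordt(1)[of t] by simp
    hence "t ^ (CARD('f) ^ j) = t ^ (CARD('f) ^ (j mod ordt t))" using 1 by blast
    moreover have "i mod ordt t = j mod ordt t" using j by simp
    ultimately show ?thesis using frob_periodic[of t j] j by simp
  qed
qed

lemma ordt_dvd: "ordt t dvd r"
proof -
  have "t ^ (CARD('f) ^ (r mod ordt t)) = t" using frob_mod[of t r] frob_r by simp
  moreover have "r mod ordt t < ordt t" using ordt(1) by simp
  ultimately have "r mod ordt t = 0" using ordt_min[of "r mod ordt t" t] by auto
  thus ?thesis by (simp add: mod_eq_0_iff_dvd)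
qed

lemma frob_inj_ordt:
  assumes "i < ordt t" "j < ordt t" "t ^ (CARD('f) ^ i) = (t::'e) ^ (CARD('f) ^ j)"
  shows "i = j"
proof (rule ccontr)
  assume "i \<noteq> j"
  then consider "i < j" | "j < i" by linarith
  thus False
  proof cases
    case 1
    have "t ^ (CARD('f) ^ (i + (ordt t - j))) = (t ^ (CARD('f) ^ i)) ^ (CARD('f) ^ (ordt t - j))"
      by (simp only: frob_frob)
    also have "\<dots> = (t ^ (CARD('f) ^ j)) ^ (CARD('f) ^ (ordt t - j))" using assms(3) by simp
    also have "\<dots> = t ^ (CARD('f) ^ ordt t)" using assms(1,2) by (simp add: frob_frob)
    also have "\<dots> = t" by (rule ordt(2))
    finally have "t ^ (CARD('f) ^ (i + (ordt t - j))) = t" .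
    moreover have "0 < i + (ordt t - j)" "i + (ordt t - j) < ordt t" using 1 assms by linarith+
    ultimately show False using ordt_min[of _ t] by (meson)
  next
    case 2
    have "t ^ (CARD('f) ^ (j + (ordt t - i))) = (t ^ (CARD('f) ^ j)) ^ (CARD('f) ^ (ordt t - i))"
      by (simp only: frob_frob)
    also have "\<dots> = (t ^ (CARD('f) ^ i)) ^ (CARD('f) ^ (ordt t - i))" using assms(3) by simp
    also have "\<dots> = t ^ (CARD('f) ^ ordt t)" using assms(1,2) by (simp add: frob_frob)
    also have "\<dots> = t" by (rule ordt(2))
    finally have "t ^ (CARD('f) ^ (j + (ordt t - i))) = t" .
    moreover have "0 < j + (ordt t - i)" "j + (ordt t - i) < ordt t" using 2 assms by linarith+
    ultimately show False using ordt_min[of _ t] by (meson)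
  qed
qed

definition Qe :: "'e \<Rightarrow> 'e poly" where
  "Qe t = (\<Prod>i<ordt t. [:- (t ^ (CARD('f) ^ i)), 1:])"

lemma Qe_lead: "lead_coeff (Qe t) = 1"
  by (simp add: Qe_def lead_coeff_prod)

lemma Qe_degree: "degree (Qe t) = ordt t"
  by (simp add: Qe_def degree_prod_sum_eq)

lemma map_frob_linear: "map_poly (\<lambda>c. c ^ CARD('f)) [:- (a::'e), 1:] = [:- (a ^ CARD('f)), 1:]"
proof (rule poly_eqI)
  fix n
  have q0: "CARD('f) \<noteq> 0" by simp
  have m: "(- a) ^ CARD('f) = - (a ^ CARD('f))" using frob_uminus[of a 1] by simp
  show "coeff (map_poly (\<lambda>c. c ^ CARD('f)) [:- a, 1:]) n = coeff [:- (a ^ CARD('f)), 1:] n"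
    using q0 m by (cases n) (auto simp: coeff_map_poly coeff_pCons split: nat.split)
qed

lemma Qe_frob: "map_poly (\<lambda>c. c ^ CARD('f)) (Qe t) = Qe t"
proof -
  have q0: "CARD('f) \<noteq> 0" by simp
  define g where "g i = [:- (t ^ (CARD('f) ^ i)), 1:]" for i
  have "map_poly (\<lambda>c. c ^ CARD('f)) (Qe t) = (\<Prod>i<ordt t. map_poly (\<lambda>c. c ^ CARD('f)) (g i))"
    unfolding Qe_def g_def
    by (rule map_poly_hom_prod) (use q0 frob_add in \<open>auto simp: power_mult_distrib\<close>)
  also have "\<dots> = (\<Prod>i<ordt t. g (Suc i))"
    by (intro prod.cong refl) (simp add: g_def map_frob_linear power_mult[symmetric] mult.commute)
  also have "\<dots> = (\<Prod>i<ordt t. g i)"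
  proof -
    obtain n where n: "ordt t = Suc n" using ordt(1)[of t] by (metis Suc_pred)
    have gS: "g (Suc n) = g 0" using ordt(2)[of t] n by (simp add: g_def)
    have "(\<Prod>i<Suc n. g (Suc i)) = (\<Prod>i<n. g (Suc i)) * g (Suc n)" by simp
    also have "\<dots> = g 0 * (\<Prod>i<n. g (Suc i))" by (simp add: gS mult.commute)
    also have "\<dots> = (\<Prod>i<Suc n. g i)" by (rule prod.lessThan_Suc_shift[symmetric])
    finally show ?thesis using n by simp
  qed
  finally show ?thesis by (simp add: Qe_def g_def)
qed

lemma Qe_coeff_range: "coeff (Qe t) k \<in> range \<iota>"
proof -
  have q0: "CARD('f) \<noteq> 0" by simp
  have "coeff (map_poly (\<lambda>c. c ^ CARD('f)) (Qe t)) k = coeff (Qe t) k ^ CARD('f)"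
    using q0 by (simp add: coeff_map_poly)
  hence "coeff (Qe t) k ^ CARD('f) = coeff (Qe t) k" using Qe_frob by simp
  thus ?thesis using range_hom by auto
qed

definition Qf :: "'e \<Rightarrow> 'f poly" where
  "Qf t = map_poly (inv \<iota>) (Qe t)"

lemma inv_hom_0: "inv \<iota> 0 = 0"
  using inv_hom[of 0] by simp

lemma map_Qf: "map_poly \<iota> (Qf t) = Qe t"
proof (rule poly_eqI)
  fix k
  show "coeff (map_poly \<iota> (Qf t)) k = coeff (Qe t) k"
    unfolding Qf_def using Qe_coeff_range[of t k]
    by (simp add: coeff_map_poly inv_hom_0 hom_inv)
qed

lemma Qf_lead: "lead_coeff (Qf t) = 1"
proof -
  have "\<iota> (lead_coeff (Qf t)) = 1" using map_Qf[of t] Qe_lead[of t] lead_coeff_map_hom[of "Qf t"] by simp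
  thus ?thesis using hom_one hom_eq_iff by metis
qed

lemma Qf_degree: "degree (Qf t) = ordt t"
  using map_Qf[of t] Qe_degree[of t] degree_map_hom[of "Qf t"] by simp

lemma root_Qe: "poly (Qe t) t = 0"
proof -
  have "\<exists>i\<in>{..<ordt t}. poly [:- (t ^ (CARD('f) ^ i)), 1:] t = 0"
    using ordt(1)[of t] by (intro bexI[of _ 0]) auto
  hence "(\<Prod>i<ordt t. poly [:- (t ^ (CARD('f) ^ i)), 1:] t) = 0" by (intro prod_zero) auto
  thus ?thesis by (simp add: Qe_def poly_prod)
qed

lemma degree_ge_ordt:
  assumes c0: "c \<noteq> 0" and root: "poly (map_poly \<iota> c) t = 0"
  shows "ordt t \<le> degree c"
proof -
  have mc0: "map_poly \<iota> c \<noteq> 0" using c0 by (simp add: map_poly_eq_0_iff)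
  have sub: "(\<lambda>i. t ^ (CARD('f) ^ i)) ` {..<ordt t} \<subseteq> {x. poly (map_poly \<iota> c) x = 0}"
    using root by (auto simp: poly_frob)
  have inj: "inj_on (\<lambda>i. t ^ (CARD('f) ^ i)) {..<ordt t}"
    by (auto intro!: inj_onI frob_inj_ordt)
  have "ordt t = card ((\<lambda>i. t ^ (CARD('f) ^ i)) ` {..<ordt t})" by (simp add: card_image[OF inj])
  also have "\<dots> \<le> card {x. poly (map_poly \<iota> c) x = 0}"
    by (intro card_mono sub) (simp add: poly_roots_finite mc0)
  also have "\<dots> \<le> degree (map_poly \<iota> c)" by (rule card_poly_roots_bound[OF mc0])
  finally show ?thesis by simp
qed

lemma Qf_irreducible: "irreducible (Qf t)"
proof (rule irreducibleI)
  have "lead_coeff (Qf t) = 1" by (rule Qf_lead)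
  thus nz: "Qf t \<noteq> 0" by auto
  show "\<not> is_unit (Qf t)"
    using is_unit_iff_degree[OF nz] Qf_degree ordt(1)[of t] by simp
  fix a b assume ab: "Qf t = a * b"
  have a0: "a \<noteq> 0" and b0: "b \<noteq> 0" using nz ab by auto
  have deg: "degree a + degree b = ordt t" using ab a0 b0 Qf_degree[of t] by (simp add: degree_mult_eq)
  have "poly (map_poly \<iota> a) t * poly (map_poly \<iota> b) t = 0"
  proof -
    have "Qe t = map_poly \<iota> a * map_poly \<iota> b" using map_Qf[of t] ab by (simp add: map_hom_mult)
    hence "poly (Qe t) t = poly (map_poly \<iota> a) t * poly (map_poly \<iota> b) t" by simp
    thus ?thesis using root_Qe[of t] by simp
  qed
  hence "poly (map_poly \<iota> a) t = 0 \<or> poly (map_poly \<iota> b) t = 0" by simp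
  thus "is_unit a \<or> is_unit b"
  proof
    assume "poly (map_poly \<iota> a) t = 0"
    hence "ordt t \<le> degree a" using a0 by (intro degree_ge_ordt)
    hence "degree b = 0" using deg by simp
    thus ?thesis using is_unit_iff_degree[OF b0] by simp
  next
    assume "poly (map_poly \<iota> b) t = 0"
    hence "ordt t \<le> degree b" using b0 by (intro degree_ge_ordt)
    hence "degree a = 0" using deg by simp
    thus ?thesis using is_unit_iff_degree[OF a0] by simp
  qed
qed

lemma prod_periodic:
  fixes g :: "nat \<Rightarrow> 'c::comm_monoid_mult"
  assumes per: "\<And>i. g (i + e) = g i"
  shows "(\<Prod>i<m * e. g i) = (\<Prod>i<e. g i) ^ m"
proof (induction m)
  case (Suc m)
  have per': "g (i + m' * e) = g i" for i m'
  proof (induction m')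
    case (Suc m')
    have "i + Suc m' * e = (i + m' * e) + e" by simp
    hence "g (i + Suc m' * e) = g (i + m' * e)" using per by metis
    thus ?case using Suc by simp
  qed simp
  have "(\<Prod>i<Suc m * e. g i) = (\<Prod>i\<in>{0..<m * e}. g i) * (\<Prod>i\<in>{m * e..<Suc m * e}. g i)"
    by (subst prod.atLeastLessThan_concat) (auto simp: atLeast0LessThan)
  also have "(\<Prod>i\<in>{m * e..<Suc m * e}. g i) = (\<Prod>i\<in>{0 + m * e..<e + m * e}. g i)"
    by (simp add: add.commute)
  also have "\<dots> = (\<Prod>i\<in>{0..<e}. g (i + m * e))" by (rule prod.shift_bounds_nat_ivl)
  also have "\<dots> = (\<Prod>i<e. g i)" by (simp add: per' atLeast0LessThan)
  finally show ?case using Suc by (simp add: atLeast0LessThan mult.commute)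
qed simp

definition Pe :: "'e \<Rightarrow> 'e poly" where
  "Pe t = (\<Prod>i<r. [:- (t ^ (CARD('f) ^ i)), 1:])"

lemma Pe_Qe: "Pe t = Qe t ^ (r div ordt t)"
proof -
  have r: "r = (r div ordt t) * ordt t" using ordt_dvd[of t] by simp
  have "Pe t = (\<Prod>i<(r div ordt t) * ordt t. [:- (t ^ (CARD('f) ^ i)), 1:])"
    unfolding Pe_def using r by simp
  also have "\<dots> = Qe t ^ (r div ordt t)"
    unfolding Qe_def by (rule prod_periodic) (simp add: frob_periodic)
  finally show ?thesis .
qed

lemma coeff0_prod_linear: "coeff (\<Prod>i\<in>A. [:- (a i), 1:]) 0 = (\<Prod>i\<in>A. - (a i :: 'e))"
  by (simp add: poly_0_coeff_0[symmetric] poly_prod)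

lemma reflect_linear: "reflect_poly [:- (a :: 'e), 1:] = [:1, - a:]"
proof (rule poly_eqI)
  fix n show "coeff (reflect_poly [:- a, 1:]) n = coeff [:1, - a:] n"
    by (cases n) (auto simp: coeff_reflect_poly coeff_pCons split: nat.split)
qed

lemma coeff1_prod_reflect:
  "finite A \<Longrightarrow> coeff (\<Prod>i\<in>A. [:1, - (a i :: 'e):]) 0 = 1 \<and> coeff (\<Prod>i\<in>A. [:1, - (a i):]) 1 = - (\<Sum>i\<in>A. a i)"
proof (induction A rule: finite_induct)
  case (insert x A)
  thus ?case by (simp add: mult_pCons_left coeff_pCons)
qed simp

lemma Pe_lead: "lead_coeff (Pe t) = 1"
  by (simp add: Pe_def lead_coeff_prod)

lemma Pe_degree: "degree (Pe t) = r"
  by (simp add: Pe_def degree_prod_sum_eq)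

lemma Pe_coeff0: "coeff (Pe t) 0 = (-1) ^ r * (\<Prod>i<r. t ^ (CARD('f) ^ i))"
  unfolding Pe_def coeff0_prod_linear by (simp add: prod_uminus)

lemma Pe_reflect1: "coeff (reflect_poly (Pe t)) 1 = - (\<Sum>i<r. t ^ (CARD('f) ^ i))"
  unfolding Pe_def reflect_poly_prod reflect_linear using coeff1_prod_reflect[of "{..<r}"] by simp

lemma lam_Qf_power:
  "lam \<psi> (Qf t ^ (r div ordt t)) = Poly_Mapping.single (MW (fin_norm \<iota> r t)) (\<psi> (fin_trace \<iota> r t))"
proof -
  define g where "g = Qf t ^ (r div ordt t)"
  have mg: "map_poly \<iota> g = Pe t" by (simp add: g_def map_hom_power map_Qf Pe_Qe)
  have dg: "degree g = r" using Pe_degree[of t] degree_map_hom[of g] mg by simp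
  have "\<iota> ((-1) ^ degree g * coeff g 0) = (-1) ^ r * coeff (Pe t) 0"
    using dg mg[symmetric] by (simp add: hom_mult hom_power coeff_map_poly hom_one)
  also have "\<dots> = (\<Prod>i<r. t ^ (CARD('f) ^ i))" by (simp add: Pe_coeff0 power_mult_distrib[symmetric])
  finally have n: "(-1) ^ degree g * coeff g 0 = fin_norm \<iota> r t"
    unfolding fin_norm_def by (metis inv_hom)
  have "\<iota> (- coeff (reflect_poly g) 1) = - \<iota> (coeff g (r - 1))"
    using dg r_pos by (simp add: coeff_reflect_poly)
  also have "\<dots> = - coeff (Pe t) (r - 1)" using mg[symmetric] by (simp add: coeff_map_poly)
  also have "\<dots> = - coeff (reflect_poly (Pe t)) 1" using Pe_degree[of t] r_pos by (simp add: coeff_reflect_poly)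
  also have "\<dots> = (\<Sum>i<r. t ^ (CARD('f) ^ i))" using Pe_reflect1[of t] by simp
  finally have tr: "- coeff (reflect_poly g) 1 = fin_trace \<iota> r t"
    unfolding fin_trace_def by (metis inv_hom)
  show ?thesis unfolding g_def[symmetric] lam_def n tr ..
qed

end


locale kfepsi = kfe \<iota> r + addchar \<psi>
  for \<iota> :: "'f::{finite,field} \<Rightarrow> 'e::{finite,field}" and r and \<psi> :: "'f \<Rightarrow> complex"
begin

definition eps :: "'f galg" where
  "eps = (\<Sum>t\<in>(UNIV :: 'e set). Poly_Mapping.single (MW (fin_norm \<iota> r t)) (\<psi> (fin_trace \<iota> r t)))"

definition Fm :: "'e \<Rightarrow> 'f poly \<times> nat" where
  "Fm t = (Qf t, r div ordt t)"

lemma Fm_Prs: "Fm t \<in> Prs r"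
proof -
  have "ordt t \<le> r" using ordt_dvd[of t] r_pos by (intro dvd_imp_le) auto
  hence "0 < r div ordt t" using ordt(1)[of t] by (simp add: div_greater_zero_iff)
  moreover have "r div ordt t * ordt t = r" using ordt_dvd[of t] by simp
  moreover have "lead_coeff (Qf t) = 1" by (rule Qf_lead)
  ultimately show ?thesis
    by (simp add: Fm_def Prs_def Qf_irreducible Qf_degree)
qed

lemma W_eq: "Poly_Mapping.single (MW (fin_norm \<iota> r t)) (\<psi> (fin_trace \<iota> r t)) = lam \<psi> (fst (Fm t)) ^ snd (Fm t)"
proof -
  have "lam \<psi> (Qf t) ^ (r div ordt t) = lam \<psi> (Qf t ^ (r div ordt t))"
    by (rule w_power[symmetric, OF lam_mult lam_one Qf_lead])
  also have "\<dots> = Poly_Mapping.single (MW (fin_norm \<iota> r t)) (\<psi> (fin_trace \<iota> r t))" by (rule lam_Qf_power)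
  finally show ?thesis unfolding Fm_def fst_conv snd_conv by (rule sym)
qed

lemma fiber_le:
  assumes y: "y \<in> Prs r"
  shows "card {t. Fm t = y} \<le> degree (fst y)"
proof -
  have ly: "lead_coeff (fst y) = 1" using y by (auto simp: Prs_def)
  hence m0: "map_poly \<iota> (fst y) \<noteq> 0" by (auto simp: map_poly_eq_0_iff)
  have "{t. Fm t = y} \<subseteq> {x. poly (map_poly \<iota> (fst y)) x = 0}"
  proof
    fix t assume "t \<in> {t. Fm t = y}"
    hence "Qf t = fst y" by (auto simp: Fm_def)
    hence "map_poly \<iota> (fst y) = Qe t" using map_Qf[of t] by simp
    thus "t \<in> {x. poly (map_poly \<iota> (fst y)) x = 0}" using root_Qe[of t] by simp
  qed
  hence "card {t. Fm t = y} \<le> card {x. poly (map_poly \<iota> (fst y)) x = 0}"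
    by (intro card_mono) auto
  also have "\<dots> \<le> degree (map_poly \<iota> (fst y))" by (rule card_poly_roots_bound[OF m0])
  finally show ?thesis by simp
qed

lemma fiber_eq:
  assumes y: "y \<in> Prs r"
  shows "card {t. Fm t = y} = degree (fst y)"
proof (rule ccontr)
  assume ne: "card {t. Fm t = y} \<noteq> degree (fst y)"
  have a1: "\<forall>y\<in>(Prs r :: ('f poly \<times> nat) set). card {t. Fm t = y} \<le> degree (fst y)" using fiber_le by blast
  have a2: "\<exists>y\<in>Prs r. card {t. Fm t = y} < degree (fst y)" using fiber_le[OF y] ne y by force
  have "(\<Sum>y\<in>Prs r. card {t. Fm t = y}) < (\<Sum>y\<in>(Prs r :: ('f poly \<times> nat) set). degree (fst y))"
    using sum_strict_mono_ex1[OF finite_Prs a1 a2] .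
  also have "\<dots> = CARD('f) ^ r" using count_Prs[of r] r_pos by simp
  also have "\<dots> = card (UNIV :: 'e set)" using degree by simp
  also have "\<dots> = (\<Sum>t\<in>(UNIV :: 'e set). 1)" by simp
  also have "\<dots> = (\<Sum>y\<in>Prs r. \<Sum>t\<in>{t \<in> UNIV. Fm t = y}. 1)"
    by (rule sum.group[symmetric]) (auto intro: finite_Prs Fm_Prs)
  also have "\<dots> = (\<Sum>y\<in>Prs r. card {t. Fm t = y})" by simp
  finally show False by simp
qed

lemma eps_eq: "eps = - ((- gam \<psi>) ^ r)"
proof -
  have "eps = (\<Sum>t\<in>(UNIV :: 'e set). lam \<psi> (fst (Fm t)) ^ snd (Fm t))"
    unfolding eps_def by (simp add: W_eq)
  also have "\<dots> = (\<Sum>y\<in>Prs r. \<Sum>t\<in>{t \<in> UNIV. Fm t = y}. lam \<psi> (fst (Fm t)) ^ snd (Fm t))"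
    by (rule sum.group[symmetric]) (auto intro: finite_Prs Fm_Prs)
  also have "\<dots> = (\<Sum>y\<in>Prs r. of_nat (card {t. Fm t = y}) * lam \<psi> (fst y) ^ snd y)"
  proof (intro sum.cong refl)
    fix y
    have "(\<Sum>t\<in>{t \<in> UNIV. Fm t = y}. lam \<psi> (fst (Fm t)) ^ snd (Fm t)) = (\<Sum>t\<in>{t. Fm t = y}. lam \<psi> (fst y) ^ snd y)"
      by (intro sum.cong) auto
    also have "\<dots> = of_nat (card {t. Fm t = y}) * lam \<psi> (fst y) ^ snd y"
      by (simp only: sum_constant of_nat_def)
    finally show "(\<Sum>t\<in>{t \<in> UNIV. Fm t = y}. lam \<psi> (fst (Fm t)) ^ snd (Fm t)) = of_nat (card {t. Fm t = y}) * lam \<psi> (fst y) ^ snd y" .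
  qed
  also have "\<dots> = (\<Sum>y\<in>Prs r. of_nat (degree (fst y)) * lam \<psi> (fst y) ^ snd y)"
    by (intro sum.cong refl) (simp add: fiber_eq)
  also have "\<dots> = - ((- gam \<psi>) ^ r)" using N_formula[of r] r_pos by simp
  finally show ?thesis .
qed

end


context kfe
begin

lemma trace_sum_range: "(\<Sum>i<r. (x::'e) ^ (CARD('f) ^ i)) \<in> range \<iota>"
proof -
  obtain r' where r': "r = Suc r'" using r_pos by (metis Suc_pred)
  have "(\<Sum>i<r. x ^ (CARD('f) ^ i)) ^ (CARD('f) ^ 1) = (\<Sum>i<r. (x ^ (CARD('f) ^ i)) ^ (CARD('f) ^ 1))"
    by (rule frob_sum)
  also have "\<dots> = (\<Sum>i<r. x ^ (CARD('f) ^ Suc i))"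
    by (intro sum.cong refl) (simp add: power_mult[symmetric] mult.commute)
  also have "\<dots> = (\<Sum>i<r'. x ^ (CARD('f) ^ Suc i)) + x ^ (CARD('f) ^ r)" using r' by simp
  also have "x ^ (CARD('f) ^ r) = x ^ (CARD('f) ^ 0)" using frob_r by simp
  also have "(\<Sum>i<r'. x ^ (CARD('f) ^ Suc i)) + x ^ (CARD('f) ^ 0) = (\<Sum>i<r. x ^ (CARD('f) ^ i))"
    unfolding r' sum.lessThan_Suc_shift by (rule add.commute)
  finally show ?thesis using range_hom by simp
qed

lemma fin_trace_add: "fin_trace \<iota> r (x + y) = fin_trace \<iota> r x + fin_trace \<iota> r y"
proof -
  obtain a where a: "(\<Sum>i<r. x ^ (CARD('f) ^ i)) = \<iota> a" using trace_sum_range[of x] by auto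
  obtain b where b: "(\<Sum>i<r. y ^ (CARD('f) ^ i)) = \<iota> b" using trace_sum_range[of y] by auto
  have "(\<Sum>i<r. (x + y) ^ (CARD('f) ^ i)) = \<iota> (a + b)"
    by (simp add: frob_add_pow sum.distrib a b hom_add)
  thus ?thesis unfolding fin_trace_def a b by simp
qed

lemma fin_trace_0: "fin_trace \<iota> r 0 = 0"
proof -
  have "(\<Sum>i<r. (0::'e) ^ (CARD('f) ^ i)) = 0" by (intro sum.neutral) simp
  thus ?thesis unfolding fin_trace_def by (simp add: inv_hom_0)
qed

lemma fin_trace_sum: "fin_trace \<iota> r (sum f A) = (\<Sum>i\<in>A. fin_trace \<iota> r (f i))"
  by (induction A rule: infinite_finite_induct) (auto simp: fin_trace_0 fin_trace_add)

end

context addchar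
begin

lemma psi_sum: "\<psi> (sum f A) = (\<Prod>i\<in>A. \<psi> (f i))"
  by (induction A rule: infinite_finite_induct) (auto simp: psi0 char_add)

end

lemma prod_single_MW:
  "(\<Prod>i\<in>A. Poly_Mapping.single (MW (x i)) (c i)) = Poly_Mapping.single (MW (\<Prod>i\<in>A. x i)) (\<Prod>i\<in>A. c i :: complex)"
  by (induction A rule: infinite_finite_induct) (auto simp: single_MW_mult MW_one)

lemma power_sum_single:
  fixes x :: "'b \<Rightarrow> 'a::comm_monoid_mult" and c :: "'b \<Rightarrow> complex"
  assumes "finite (UNIV :: 'b set)"
  shows "(\<Sum>t\<in>UNIV. Poly_Mapping.single (MW (x t)) (c t)) ^ n =
    (\<Sum>t\<in>{..<n} \<rightarrow>\<^sub>E UNIV. Poly_Mapping.single (MW (\<Prod>i<n. x (t i))) (\<Prod>i<n. c (t i)))"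
proof -
  have "(\<Sum>t\<in>UNIV. Poly_Mapping.single (MW (x t)) (c t)) ^ n = (\<Prod>i<n. \<Sum>t\<in>UNIV. Poly_Mapping.single (MW (x t)) (c t))"
    by simp
  also have "\<dots> = (\<Sum>t\<in>{..<n} \<rightarrow>\<^sub>E UNIV. \<Prod>i<n. Poly_Mapping.single (MW (x (t i))) (c (t i)))"
    by (rule prod_sum_PiE) (use assms in auto)
  also have "\<dots> = (\<Sum>t\<in>{..<n} \<rightarrow>\<^sub>E UNIV. Poly_Mapping.single (MW (\<Prod>i<n. x (t i))) (\<Prod>i<n. c (t i)))"
    by (simp add: prod_single_MW)
  finally show ?thesis .
qed

context kfepsi
begin

lemma eps_power: "eps ^ n = (\<Sum>t\<in>{..<n} \<rightarrow>\<^sub>E (UNIV :: 'e set).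
    Poly_Mapping.single (MW (\<Prod>i<n. fin_norm \<iota> r (t i))) (\<psi> (fin_trace \<iota> r (\<Sum>i<n. t i))))"
  unfolding eps_def by (subst power_sum_single) (simp_all add: fin_trace_sum psi_sum)

lemma gam_power: "gam \<psi> ^ m = (\<Sum>s\<in>{..<m} \<rightarrow>\<^sub>E (UNIV :: 'f set).
    Poly_Mapping.single (MW (\<Prod>j<m. s j)) (\<psi> (\<Sum>j<m. s j)))"
  unfolding gam_def by (subst power_sum_single) (simp_all add: psi_sum)

lemma Kl_eq: "Kl \<psi> \<iota> r n m a = Poly_Mapping.lookup (eps ^ n * gam \<psi> ^ m) (MW a)"
proof -
  define T where "T = ({..<n} \<rightarrow>\<^sub>E (UNIV :: 'e set))"
  define S where "S = ({..<m} \<rightarrow>\<^sub>E (UNIV :: 'f set))"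
  define X where "X t = (\<Prod>i<n. fin_norm \<iota> r (t i))" for t
  define Y where "Y s = (\<Prod>j<m. s j)" for s :: "nat \<Rightarrow> 'f"
  define c where "c t s = \<psi> (fin_trace \<iota> r (\<Sum>i<n. t i)) * \<psi> (\<Sum>j<m. s j)" for t s
  have fT: "finite T" and fS: "finite S" by (auto simp: T_def S_def intro: finite_PiE)
  have "eps ^ n * gam \<psi> ^ m = (\<Sum>t\<in>T. \<Sum>s\<in>S. Poly_Mapping.single (MW (X t * Y s)) (c t s))"
    unfolding eps_power gam_power sum_product T_def[symmetric] S_def[symmetric]
    by (simp add: single_MW_mult X_def Y_def c_def)
  hence "Poly_Mapping.lookup (eps ^ n * gam \<psi> ^ m) (MW a) = (\<Sum>t\<in>T. \<Sum>s\<in>S. if X t * Y s = a then c t s else 0)"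
    by (simp add: lookup_sum Poly_Mapping.lookup_single when_def)
  also have "\<dots> = (\<Sum>x\<in>T \<times> S. if X (fst x) * Y (snd x) = a then c (fst x) (snd x) else 0)"
    by (simp add: sum.cartesian_product case_prod_beta)
  also have "\<dots> = (\<Sum>x\<in>{x\<in>T \<times> S. X (fst x) * Y (snd x) = a}. c (fst x) (snd x))"
    by (rule sum.inter_filter[symmetric]) (simp add: fT fS)
  also have "{x\<in>T \<times> S. X (fst x) * Y (snd x) = a} = {(t, s). t \<in> T \<and> s \<in> S \<and> X t * Y s = a}"
    by auto
  finally show ?thesis
    by (simp add: Kl_def T_def S_def X_def Y_def c_def case_prod_beta)
qed

end


lemma lookup_neg1_power:
  "Poly_Mapping.lookup ((-1) ^ k * Z) p = (-1) ^ k * Poly_Mapping.lookup (Z :: 'a::comm_monoid_add \<Rightarrow>\<^sub>0 complex) p"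
  by (induction k) (simp_all add: lookup_uminus)

theorem corollaryA6:
  fixes \<iota> :: "'f::{finite,field} \<Rightarrow> 'e::{finite,field}"
    and \<psi> :: "'f \<Rightarrow> complex"
    and r n :: nat and a :: 'f
  assumes hom_add: "\<And>x y. \<iota> (x + y) = \<iota> x + \<iota> y"
    and hom_mult: "\<And>x y. \<iota> (x * y) = \<iota> x * \<iota> y"
    and hom_one: "\<iota> 1 = 1"
    and degree: "CARD('e) = CARD('f) ^ r"
    and char_add: "\<And>x y. \<psi> (x + y) = \<psi> x * \<psi> y"
    and nontriv: "\<exists>x. \<psi> x \<noteq> 1"
    and a_nz: "a \<noteq> 0"
  shows "Kl \<psi> \<iota> r n r a = (-1) ^ (r - 1) * Kl \<psi> \<iota> r (n + 1) 0 a"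
proof (cases "\<psi> 0 = 0")
  case True
  have z: "\<psi> x = 0" for x using char_add[of x 0] True by simp
  have "Kl \<psi> \<iota> r m k a = 0" for m k unfolding Kl_def by (intro sum.neutral) (auto simp: z)
  thus ?thesis by simp
next
  case False
  have "\<psi> 0 * \<psi> 0 = \<psi> 0 * 1" using char_add[of 0 0] by simp
  hence psi0: "\<psi> 0 = 1" using False by (metis mult_left_cancel)
  interpret kfepsi \<iota> r \<psi>
    by unfold_locales (use hom_add hom_mult hom_one degree char_add psi0 nontriv in auto)
  obtain r' where r': "r = Suc r'" using r_pos by (metis Suc_pred)
  have e: "eps ^ (n + 1) * gam \<psi> ^ 0 = (-1) ^ r' * (eps ^ n * gam \<psi> ^ r)"
    using eps_eq r' by (simp add: power_minus[of "gam \<psi>"] algebra_simps)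
  have "(-1) ^ (r - 1) * Kl \<psi> \<iota> r (n + 1) 0 a
      = (-1) ^ r' * ((-1) ^ r' * Poly_Mapping.lookup (eps ^ n * gam \<psi> ^ r) (MW a))"
    unfolding Kl_eq e lookup_neg1_power using r' by simp
  also have "\<dots> = Poly_Mapping.lookup (eps ^ n * gam \<psi> ^ r) (MW a)"
    by (simp add: power_mult_distrib[symmetric] mult.assoc[symmetric])
  also have "\<dots> = Kl \<psi> \<iota> r n r a" by (rule Kl_eq[symmetric])
  finally show ?thesis ..
qed


end
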